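(* Consider the problem $F^*:=\min_{x\in\mathbb{R}^n} F(x)=\frac1{\ell}\sum_{i=1}^{\ell}f_i(x)+\psi(x)$ s.t. $a_i(x)\le0$, $i=1,\dots,m$, under the standing assumptions in the context, and let $\bar\xi:=\inf_{\lambda^*\in\Lambda^*}\|\lambda^*\|_\infty$. For every $\delta\ge0$ and $\xi>\bar\xi$, a minimizer $x^*_{\xi,\delta}$ of $F_{\xi,\delta}$ satisfies \[-\xi\|\bar A(x^*_{\xi,\delta})\|_1\le F(x^*_{\xi,\delta})-F^*\le m\xi\delta\log2.\] Furthermore, if $\mu>0$, the same inequalities hold also for $\xi=\bar\xi$.
   Context: Standing assumptions: (i) $F$ is $\mu$-strongly convex for some $\mu\ge0$; (ii) each $f_i$ is convex and $L_f$-smooth; (iii) $\psi$ is closed and convex; (iv) each $a_i$ is convex and $L_a$-smooth; (v) (Slater) there exist $s>0$, $\hat x$ with $a_i(\hat x)\le -s$ for all $i$; (vi) there exist $C_0>0$, $C_1\ge0$ with $\|\nabla a_i(x)\|_2^2\le C_0+C_1|a_i(x)|$ for all $x$, $i$. $\Lambda^*$ is the set of optimal dual solutions (KKT multiplier vectors) of the constrained problem. Softplus: $p_\delta(t)=\delta\log(1+\exp(t/\delta))$ for $\delta>0$, $p_0(t)=\max(0,t)$. Penalty reformulation: $F_{\xi,\delta}(x)=F(x)+\xi\sum_{i=1}^m p_\delta(a_i(x))$. $\bar A(x)=(\max(0,a_1(x)),\dots,\max(0,a_m(x)))^T$. *)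

theory Defs
  imports "HOL-Analysis.Analysis"
begin

text \<open>Proper closed convex function represented by its (nonempty) effective domain D
  and its real values on D (value +infinity outside D): closed convex means D convex,
  the function convex on D and the epigraph closed.\<close>
definition proper_closed_convex :: "('a::real_normed_vector) set \<Rightarrow> ('a \<Rightarrow> real) \<Rightarrow> bool" where
  "proper_closed_convex D g \<longleftrightarrow> D \<noteq> {} \<and> convex D \<and> convex_on D g \<and>
     closed {(x, t). x \<in> D \<and> g x \<le> t}"

definition strongly_convex_on :: "real \<Rightarrow> ('a::real_normed_vector) set \<Rightarrow> ('a \<Rightarrow> real) \<Rightarrow> bool" where
  "strongly_convex_on mu D g \<longleftrightarrow> convex D \<and>
     (\<forall>x\<in>D. \<forall>y\<in>D. \<forall>t::real. 0 \<le> t \<and> t \<le> 1 \<longrightarrow>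
        g (t *\<^sub>R x + (1 - t) *\<^sub>R y) \<le> t * g x + (1 - t) * g y - mu / 2 * t * (1 - t) * (norm (x - y))\<^sup>2)"

definition L_smooth :: "real \<Rightarrow> ('a::real_inner \<Rightarrow> real) \<Rightarrow> bool" where
  "L_smooth L g \<longleftrightarrow> (\<exists>G. (\<forall>x. (g has_derivative (\<lambda>h. G x \<bullet> h)) (at x)) \<and>
                          (\<forall>x y. norm (G x - G y) \<le> L * norm (x - y)))"

definition softplus :: "real \<Rightarrow> real \<Rightarrow> real" where
  "softplus \<delta> t = (if \<delta> = 0 then max 0 t else \<delta> * ln (1 + exp (t / \<delta>)))"

definition Fobj :: "nat \<Rightarrow> (nat \<Rightarrow> 'a \<Rightarrow> real) \<Rightarrow> ('a \<Rightarrow> real) \<Rightarrow> 'a \<Rightarrow> real" where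
  "Fobj l f \<psi> x = (1 / real l) * (\<Sum>i<l. f i x) + \<psi> x"

definition Fpen :: "nat \<Rightarrow> (nat \<Rightarrow> 'a \<Rightarrow> real) \<Rightarrow> ('a \<Rightarrow> real) \<Rightarrow> nat \<Rightarrow> (nat \<Rightarrow> 'a \<Rightarrow> real)
                     \<Rightarrow> real \<Rightarrow> real \<Rightarrow> 'a \<Rightarrow> real" where
  "Fpen l f \<psi> m a \<xi> \<delta> x = Fobj l f \<psi> x + \<xi> * (\<Sum>i<m. softplus \<delta> (a i x))"

definition dual_fun :: "'a set \<Rightarrow> ('a \<Rightarrow> real) \<Rightarrow> nat \<Rightarrow> (nat \<Rightarrow> 'a \<Rightarrow> real) \<Rightarrow> (nat \<Rightarrow> real) \<Rightarrow> ereal" where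
  "dual_fun D F m a lam = (INF x\<in>D. ereal (F x + (\<Sum>i<m. lam i * a i x)))"

definition dual_opt_set :: "'a set \<Rightarrow> ('a \<Rightarrow> real) \<Rightarrow> nat \<Rightarrow> (nat \<Rightarrow> 'a \<Rightarrow> real) \<Rightarrow> (nat \<Rightarrow> real) set" where
  "dual_opt_set D F m a = {lam. (\<forall>i<m. 0 \<le> lam i) \<and> (\<forall>i\<ge>m. lam i = 0) \<and>
      (\<forall>lam'. (\<forall>i<m. 0 \<le> lam' i) \<longrightarrow> dual_fun D F m a lam' \<le> dual_fun D F m a lam)}"

definition linf_norm :: "nat \<Rightarrow> (nat \<Rightarrow> real) \<Rightarrow> real" where
  "linf_norm m lam = Max (insert 0 {\<bar>lam i\<bar> | i. i < m})"

text \<open>xi-bar = inf over Lambda^* of the infinity norm (+infinity if Lambda^* is empty).\<close>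
definition xi_bar :: "'a set \<Rightarrow> ('a \<Rightarrow> real) \<Rightarrow> nat \<Rightarrow> (nat \<Rightarrow> 'a \<Rightarrow> real) \<Rightarrow> ereal" where
  "xi_bar D F m a = (INF lam\<in>dual_opt_set D F m a. ereal (linf_norm m lam))"

end

theory Submission imports Defs begin

lemma convex_on_sum_fun:
  fixes g :: "nat \<Rightarrow> 'a::real_vector \<Rightarrow> real"
  assumes "convex D" "\<And>i. i < m \<Longrightarrow> convex_on D (g i)"
  shows "convex_on D (\<lambda>x. \<Sum>i<m. g i x)"
  using assms(2)
proof (induction m)
  case 0 then show ?case using assms(1) by (simp add: convex_on_const)
next
  case (Suc m)
  have "convex_on D (\<lambda>x. (\<Sum>i<m. g i x) + g m x)"
    using Suc by (intro convex_on_add) auto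
  then show ?case by simp
qed

lemma one_multiplier:
  fixes F g :: "'a::real_vector \<Rightarrow> real"
  assumes cD: "convex D" and cF: "convex_on D F" and cg: "convex_on D g"
    and x0: "x0 \<in> D" "g x0 < 0"
    and feas: "\<And>x. x \<in> D \<Longrightarrow> g x \<le> 0 \<Longrightarrow> c \<le> F x"
  shows "\<exists>lam\<ge>0. \<forall>x\<in>D. c \<le> F x + lam * g x"
proof -
  have key: "(c - F y) / g y \<le> (F x - c) / (- g x)"
    if y: "y \<in> D" "g y > 0" and x: "x \<in> D" "g x < 0" for x y
  proof -
    define t where "t = g y / (g y - g x)"
    have t01: "0 \<le> t" "t \<le> 1" using x y by (auto simp: t_def field_simps)
    define z where "z = (1 - t) *\<^sub>R y + t *\<^sub>R x"
    have zD: "z \<in> D" using cD x y t01 unfolding z_def convex_alt by auto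
    have "g z \<le> (1 - t) * g y + t * g x" using convex_onD[OF cg] t01 x y z_def by auto
    also have "\<dots> = 0" using x y by (simp add: t_def field_simps)
    finally have "c \<le> F z" using feas zD by auto
    also have "F z \<le> (1 - t) * F y + t * F x" using convex_onD[OF cF] t01 x y z_def by auto
    finally have "c \<le> (1 - t) * F y + t * F x" .
    hence "c * (g y - g x) \<le> ((1 - t) * F y + t * F x) * (g y - g x)"
      using x y by (intro mult_right_mono) auto
    also have "\<dots> = ((1 - t) * (g y - g x)) * F y + (t * (g y - g x)) * F x"
      by (simp add: algebra_simps)
    also have "(1 - t) * (g y - g x) = - g x" using x y by (simp add: t_def field_simps)
    also have "t * (g y - g x) = g y" using x y by (simp add: t_def field_simps)
    finally have "c * (g y - g x) \<le> - g x * F y + g y * F x" .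
    then show ?thesis using x y by (simp add: field_simps)
  qed
  define S where "S = {(c - F y) / g y | y. y \<in> D \<and> g y > 0}"
  have bdd: "bdd_above S" unfolding S_def bdd_above_def using key[OF _ _ x0] by blast
  define lam where "lam = (if S = {} then 0 else max 0 (Sup S))"
  have lam0: "lam \<ge> 0" by (simp add: lam_def)
  have upper: "(c - F y) / g y \<le> lam" if "y \<in> D" "g y > 0" for y
  proof -
    have "(c - F y) / g y \<in> S" using that S_def by blast
    hence "S \<noteq> {}" "(c - F y) / g y \<le> Sup S" using cSup_upper[OF _ bdd] by auto
    thus ?thesis by (simp add: lam_def)
  qed
  have lower: "lam \<le> (F x - c) / (- g x)" if "x \<in> D" "g x < 0" for x
  proof -
    have "c \<le> F x" using feas that by auto
    hence "0 \<le> (F x - c) / (- g x)" using that by (intro divide_nonneg_pos) auto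
    moreover have "S \<noteq> {} \<Longrightarrow> Sup S \<le> (F x - c) / (- g x)"
      by (rule cSup_least) (use key that in \<open>auto simp: S_def\<close>)
    ultimately show ?thesis by (auto simp: lam_def)
  qed
  have "c \<le> F x + lam * g x" if x: "x \<in> D" for x
  proof (cases "g x" "0::real" rule: linorder_cases)
    case less
    have "lam * (- g x) \<le> F x - c" using lower[OF x less] less by (simp add: field_simps)
    thus ?thesis by simp
  next
    case equal thus ?thesis using feas x by simp
  next
    case greater
    have "c - F x \<le> lam * g x" using upper[OF x greater] greater by (simp add: field_simps)
    thus ?thesis by simp
  qed
  thus ?thesis using lam0 by blast
qed

lemma multipliers:
  fixes a :: "nat \<Rightarrow> 'a::real_vector \<Rightarrow> real"
  assumes "convex D" "convex_on D F" "\<And>i. i < m \<Longrightarrow> convex_on D (a i)"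
    "x0 \<in> D" "\<And>i. i < m \<Longrightarrow> a i x0 < 0"
    "\<And>x. x \<in> D \<Longrightarrow> (\<forall>i<m. a i x \<le> 0) \<Longrightarrow> c \<le> F x"
  shows "\<exists>lam. (\<forall>i<m. 0 \<le> lam i) \<and> (\<forall>i\<ge>m. lam i = 0) \<and>
           (\<forall>x\<in>D. c \<le> F x + (\<Sum>i<m. lam i * a i x))"
  using assms
proof (induction m arbitrary: D F)
  case 0
  then show ?case by (intro exI[of _ "\<lambda>_. 0"]) auto
next
  case (Suc m)
  define D' where "D' = {x\<in>D. a m x \<le> 0}"
  have cD': "convex D'"
    unfolding D'_def convex_alt
  proof (safe)
    fix x y and u :: real assume h: "x \<in> D" "a m x \<le> 0" "y \<in> D" "a m y \<le> 0" "0 \<le> u" "u \<le> 1"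
    show "(1 - u) *\<^sub>R x + u *\<^sub>R y \<in> D" using Suc.prems(1) h by (simp add: convex_alt)
    have "a m ((1 - u) *\<^sub>R x + u *\<^sub>R y) \<le> (1 - u) * a m x + u * a m y"
      using convex_onD[OF Suc.prems(3)[of m]] h by auto
    also have "\<dots> \<le> 0" using h by (simp add: add_nonpos_nonpos mult_nonneg_nonpos)
    finally show "a m ((1 - u) *\<^sub>R x + u *\<^sub>R y) \<le> 0" .
  qed
  have sub: "D' \<subseteq> D" by (auto simp: D'_def)
  obtain lam where lam: "\<forall>i<m. 0 \<le> lam i" "\<forall>i\<ge>m. lam i = 0"
    "\<forall>x\<in>D'. c \<le> F x + (\<Sum>i<m. lam i * a i x)"
  proof -
    have "\<exists>lam. (\<forall>i<m. 0 \<le> lam i) \<and> (\<forall>i\<ge>m. lam i = 0) \<and>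
           (\<forall>x\<in>D'. c \<le> F x + (\<Sum>i<m. lam i * a i x))"
    proof (rule Suc.IH[of D' F])
      show "convex D'" by (rule cD')
      show "convex_on D' F" by (rule convex_on_subset[OF Suc.prems(2) sub cD'])
      show "convex_on D' (a i)" if "i < m" for i
        using convex_on_subset[OF Suc.prems(3) sub cD'] that by auto
      show "x0 \<in> D'" using Suc.prems(4) Suc.prems(5)[of m] by (auto simp: D'_def)
      show "a i x0 < 0" if "i < m" for i using Suc.prems(5) that by auto
      show "c \<le> F x" if "x \<in> D'" "\<forall>i<m. a i x \<le> 0" for x
        using Suc.prems(6)[of x] that by (auto simp: D'_def less_Suc_eq)
    qed
    thus ?thesis using that by blast
  qed
  define L where "L x = F x + (\<Sum>i<m. lam i * a i x)" for x
  have cL: "convex_on D L" unfolding L_def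
    using Suc.prems lam(1)
    by (intro convex_on_add convex_on_sum_fun convex_on_cmul) auto
  obtain mu where mu: "mu \<ge> 0" "\<forall>x\<in>D. c \<le> L x + mu * a m x"
    using one_multiplier[OF Suc.prems(1) cL Suc.prems(3)[of m] Suc.prems(4) Suc.prems(5)[of m], where c=c]
      lam(3) by (auto simp: L_def D'_def)
  show ?case
    apply (intro exI[of _ "lam(m := mu)"])
    using lam mu by (auto simp: L_def less_Suc_eq)
qed


lemma linf_ge: "i < m \<Longrightarrow> \<bar>lam i\<bar> \<le> linf_norm m lam"
  unfolding linf_norm_def
proof -
  assume "i < m"
  have fin: "finite {\<bar>lam i\<bar> | i. i < m}"
    using finite_imageI[of "{..<m}" "\<lambda>i. \<bar>lam i\<bar>"] by (simp add: image_def lessThan_def)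
  show "\<bar>lam i\<bar> \<le> Max (insert 0 {\<bar>lam i\<bar> | i. i < m})"
    using fin \<open>i < m\<close> by (intro Max_ge) auto
qed

lemma linf_nonneg: "0 \<le> linf_norm m lam"
  unfolding linf_norm_def
proof -
  have fin: "finite {\<bar>lam i\<bar> | i. i < m}"
    using finite_imageI[of "{..<m}" "\<lambda>i. \<bar>lam i\<bar>"] by (simp add: image_def lessThan_def)
  show "0 \<le> Max (insert 0 {\<bar>lam i\<bar> | i. i < m})"
    using fin by (intro Max_ge) auto
qed

lemma softplus_nonneg: "\<delta> \<ge> 0 \<Longrightarrow> 0 \<le> softplus \<delta> t"
  unfolding softplus_def by auto

lemma softplus_le: "\<delta> \<ge> 0 \<Longrightarrow> t \<le> 0 \<Longrightarrow> softplus \<delta> t \<le> \<delta> * ln 2"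
proof -
  assume d: "\<delta> \<ge> 0" and t: "t \<le> 0"
  show ?thesis
  proof (cases "\<delta> = 0")
    case True then show ?thesis using t by (simp add: softplus_def)
  next
    case False
    hence dp: "\<delta> > 0" using d by simp
    have "t / \<delta> \<le> 0" using t dp by (simp add: divide_nonpos_pos)
    hence "exp (t / \<delta>) \<le> 1" by simp
    hence "ln (1 + exp (t / \<delta>)) \<le> ln 2" by (subst ln_le_cancel_iff) (auto simp: add_pos_pos)
    thus ?thesis using False dp by (simp add: softplus_def mult_left_mono)
  qed
qed

theorem proposition1:
  fixes l m :: nat
    and f :: "nat \<Rightarrow> real^'n \<Rightarrow> real"
    and \<psi> :: "real^'n \<Rightarrow> real"
    and D :: "(real^'n) set"
    and a :: "nat \<Rightarrow> real^'n \<Rightarrow> real"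
    and ga :: "nat \<Rightarrow> real^'n \<Rightarrow> real^'n"
    and \<mu> Lf La s C0 C1 Fstar \<xi> \<delta> :: real
    and xhat xs :: "real^'n"
  assumes l_pos: "l \<ge> 1"
    and mu: "\<mu> \<ge> 0"
    and F_sc: "strongly_convex_on \<mu> D (Fobj l f \<psi>)"
    and f_convex: "\<And>i. i < l \<Longrightarrow> convex_on UNIV (f i)"
    and f_smooth: "\<And>i. i < l \<Longrightarrow> L_smooth Lf (f i)"
    and psi_closed_convex: "proper_closed_convex D \<psi>"
    and a_convex: "\<And>i. i < m \<Longrightarrow> convex_on UNIV (a i)"
    and a_grad: "\<And>i x. i < m \<Longrightarrow> (a i has_derivative (\<lambda>h. ga i x \<bullet> h)) (at x)"
    and a_smooth: "\<And>i x y. i < m \<Longrightarrow> norm (ga i x - ga i y) \<le> La * norm (x - y)"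
    and slater: "s > 0" "xhat \<in> D" "\<And>i. i < m \<Longrightarrow> a i xhat \<le> - s"
    and grad_growth: "C0 > 0" "C1 \<ge> 0"
        "\<And>i x. i < m \<Longrightarrow> (norm (ga i x))\<^sup>2 \<le> C0 + C1 * \<bar>a i x\<bar>"
    and Fstar_min: "\<exists>xo\<in>D. (\<forall>i<m. a i xo \<le> 0) \<and> Fobj l f \<psi> xo = Fstar"
        "\<And>x. x \<in> D \<Longrightarrow> (\<forall>i<m. a i x \<le> 0) \<Longrightarrow> Fstar \<le> Fobj l f \<psi> x"
    and delta: "\<delta> \<ge> 0"
    and xi: "xi_bar D (Fobj l f \<psi>) m a < ereal \<xi> \<or>
             (\<mu> > 0 \<and> xi_bar D (Fobj l f \<psi>) m a = ereal \<xi>)"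
    and xs_min: "xs \<in> D" "\<And>y. y \<in> D \<Longrightarrow> Fpen l f \<psi> m a \<xi> \<delta> xs \<le> Fpen l f \<psi> m a \<xi> \<delta> y"
  shows "- \<xi> * (\<Sum>i<m. max 0 (a i xs)) \<le> Fobj l f \<psi> xs - Fstar
         \<and> Fobj l f \<psi> xs - Fstar \<le> real m * \<xi> * \<delta> * ln 2"
proof -
  let ?F = "Fobj l f \<psi>"
  have cD: "convex D" using psi_closed_convex by (simp add: proper_closed_convex_def)
  have cF: "convex_on D ?F"
  proof (rule convex_onI[OF _ cD])
    fix t :: real and x y assume h: "0 < t" "t < 1" "x \<in> D" "y \<in> D"
    have "?F (t *\<^sub>R y + (1 - t) *\<^sub>R x) \<le> t * ?F y + (1 - t) * ?F x - \<mu> / 2 * t * (1 - t) * (norm (y - x))\<^sup>2"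
      using F_sc h unfolding strongly_convex_on_def by auto
    moreover have "0 \<le> \<mu> / 2 * t * (1 - t) * (norm (y - x))\<^sup>2" using mu h by auto
    ultimately show "?F ((1 - t) *\<^sub>R x + t *\<^sub>R y) \<le> (1 - t) * ?F x + t * ?F y"
      by (simp add: add.commute)
  qed
  obtain lam0 where lam0: "\<forall>i<m. 0 \<le> lam0 i" "\<forall>x\<in>D. Fstar \<le> ?F x + (\<Sum>i<m. lam0 i * a i x)"
    using multipliers[OF cD cF, of m a xhat Fstar] a_convex convex_on_subset[OF _ _ cD]
      slater Fstar_min(2) by force
  have d0: "ereal Fstar \<le> dual_fun D ?F m a lam0"
    unfolding dual_fun_def using lam0(2) by (intro INF_greatest) auto
  have dual_bound: "Fstar \<le> ?F x + (\<Sum>i<m. lam i * a i x)"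
    if lam: "lam \<in> dual_opt_set D ?F m a" and x: "x \<in> D" for lam x
  proof -
    have "dual_fun D ?F m a lam0 \<le> dual_fun D ?F m a lam"
      using lam lam0(1) by (simp add: dual_opt_set_def)
    moreover have "dual_fun D ?F m a lam \<le> ereal (?F x + (\<Sum>i<m. lam i * a i x))"
      unfolding dual_fun_def using x by (rule INF_lower)
    ultimately have "ereal Fstar \<le> ereal (?F x + (\<Sum>i<m. lam i * a i x))" using d0 by (meson order_trans)
    thus ?thesis by simp
  qed
  have xb0: "ereal 0 \<le> xi_bar D ?F m a"
    unfolding xi_bar_def using linf_nonneg by (intro INF_greatest) auto
  have xi_ge: "xi_bar D ?F m a \<le> ereal \<xi>" using xi by auto
  have "ereal 0 \<le> ereal \<xi>" using xb0 xi_ge by (meson order_trans)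
  hence xi0: "0 \<le> \<xi>" by simp
  define S where "S = (\<Sum>i<m. max 0 (a i xs))"
  have S0: "0 \<le> S" unfolding S_def by (intro sum_nonneg) auto
  have approx: "Fstar - ?F xs \<le> (\<xi> + e) * S" if e: "e > 0" for e
  proof -
    have "xi_bar D ?F m a < ereal (\<xi> + e)" 
    proof -
      have "ereal \<xi> < ereal (\<xi> + e)" using e by simp
      thus ?thesis using xi_ge by (rule le_less_trans[rotated])
    qed
    then obtain lam where lam: "lam \<in> dual_opt_set D ?F m a" "linf_norm m lam < \<xi> + e"
      unfolding xi_bar_def INF_less_iff by auto
    have "Fstar \<le> ?F xs + (\<Sum>i<m. lam i * a i xs)" using dual_bound[OF lam(1) xs_min(1)] .
    also have "(\<Sum>i<m. lam i * a i xs) \<le> (\<Sum>i<m. linf_norm m lam * max 0 (a i xs))"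
    proof (rule sum_mono)
      fix i assume "i \<in> {..<m}"
      hence i: "i < m" by simp
      have l0: "0 \<le> lam i" using lam(1) i by (simp add: dual_opt_set_def)
      have "lam i * a i xs \<le> lam i * max 0 (a i xs)" using l0 by (intro mult_left_mono) auto
      also have "\<dots> \<le> linf_norm m lam * max 0 (a i xs)"
        using linf_ge[OF i, of lam] l0 by (intro mult_right_mono) auto
      finally show "lam i * a i xs \<le> linf_norm m lam * max 0 (a i xs)" .
    qed
    also have "(\<Sum>i<m. linf_norm m lam * max 0 (a i xs)) = linf_norm m lam * S"
      by (simp add: S_def sum_distrib_left)
    also have "\<dots> \<le> (\<xi> + e) * S" using lam(2) S0 by (intro mult_right_mono) auto
    finally show ?thesis by simp
  qed
  have lowerb: "Fstar - ?F xs \<le> \<xi> * S"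
  proof (rule field_le_epsilon)
    fix e :: real assume e: "0 < e"
    have "Fstar - ?F xs \<le> (\<xi> + e / (S + 1)) * S" using approx e S0 by auto
    also have "\<dots> = \<xi> * S + e * (S / (S + 1))" using S0 by (simp add: field_simps)
    also have "\<dots> \<le> \<xi> * S + e * 1" using S0 e by (intro add_left_mono mult_left_mono) auto
    finally show "Fstar - ?F xs \<le> \<xi> * S + e" by simp
  qed
  obtain xo where xo: "xo \<in> D" "\<forall>i<m. a i xo \<le> 0" "?F xo = Fstar" using Fstar_min(1) by blast
  have "Fpen l f \<psi> m a \<xi> \<delta> xs \<le> Fpen l f \<psi> m a \<xi> \<delta> xo" using xs_min(2) xo(1) .
  hence pen: "?F xs + \<xi> * (\<Sum>i<m. softplus \<delta> (a i xs)) \<le> Fstar + \<xi> * (\<Sum>i<m. softplus \<delta> (a i xo))"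
    using xo by (simp add: Fpen_def)
  have "(\<Sum>i<m. softplus \<delta> (a i xo)) \<le> (\<Sum>i<m. \<delta> * ln 2)"
    using xo(2) delta by (intro sum_mono softplus_le) auto
  hence "\<xi> * (\<Sum>i<m. softplus \<delta> (a i xo)) \<le> \<xi> * (real m * (\<delta> * ln 2))"
    using xi0 by (intro mult_left_mono) auto
  moreover have "0 \<le> \<xi> * (\<Sum>i<m. softplus \<delta> (a i xs))"
    using xi0 delta softplus_nonneg by (intro mult_nonneg_nonneg sum_nonneg) auto
  ultimately have "?F xs - Fstar \<le> real m * \<xi> * \<delta> * ln 2" using pen by (simp add: mult_ac)
  moreover have "- \<xi> * S \<le> ?F xs - Fstar" using lowerb by simp
  ultimately show ?thesis unfolding S_def by blast
qed

end
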